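(* Let $F_2=\langle r,s\mid\ \rangle$ be the free group of rank two and $\phi_*\colon F_2\to F_2$ the automorphism $r\mapsto s$, $s\mapsto rs$. Then $$\{\chi_\rho\in X(F_2,\mathrm{SL}(2,\mathbb{C}))\mid \phi^*(\chi_\rho)=\overline{\chi_\rho}\}\cong\{x\in\mathbb{C}\mid |x-1|=1\},$$ the homeomorphism being given by $x=\mathrm{trace}(\rho(s))=\chi_\rho(s)$.
   Context: $X(F_2,\mathrm{SL}(2,\mathbb{C}))$ is the $\mathrm{SL}(2,\mathbb{C})$-character variety of $F_2$, whose points are characters $\chi_\rho(\gamma)=\mathrm{trace}(\rho(\gamma))$ of representations $\rho\colon F_2\to\mathrm{SL}(2,\mathbb{C})$. $\phi^*(\chi)=\chi\circ\phi_*$, and $\overline{\chi}(\gamma)=\overline{\chi(\gamma)}$. *)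

theory Defs
  imports "HOL-Analysis.Analysis"
begin

datatype gen = Gr | Gs

text \<open>Words in the generators and their inverses; (g, True) denotes g^-1.
  Elements of F_2 are represented by (not necessarily reduced) words.\<close>
type_synonym word = "(gen \<times> bool) list"

definition letter_mat :: "(gen \<Rightarrow> complex^2^2) \<Rightarrow> gen \<times> bool \<Rightarrow> complex^2^2" where
  "letter_mat \<rho> l = (if snd l then matrix_inv (\<rho> (fst l)) else \<rho> (fst l))"

fun rep_word :: "(gen \<Rightarrow> complex^2^2) \<Rightarrow> word \<Rightarrow> complex^2^2" where
  "rep_word \<rho> [] = mat 1"
| "rep_word \<rho> (l # w) = letter_mat \<rho> l ** rep_word \<rho> w"

definition SL2_rep :: "(gen \<Rightarrow> complex^2^2) \<Rightarrow> bool" where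
  "SL2_rep \<rho> \<longleftrightarrow> (\<forall>g. det (\<rho> g) = 1)"

definition character :: "(gen \<Rightarrow> complex^2^2) \<Rightarrow> word \<Rightarrow> complex" where
  "character \<rho> w = trace (rep_word \<rho> w)"

text \<open>The character variety X(F_2, SL(2,C)), as a subspace of the space of functions
  F_2 \<rightarrow> C (product topology of pointwise convergence).\<close>
definition char_variety :: "(word \<Rightarrow> complex) set" where
  "char_variety = {\<psi>. \<exists>\<rho>. SL2_rep \<rho> \<and> \<psi> = character \<rho>}"

fun phi_letter :: "gen \<times> bool \<Rightarrow> word" where
  "phi_letter (Gr, False) = [(Gs, False)]"
| "phi_letter (Gs, False) = [(Gr, False), (Gs, False)]"
| "phi_letter (Gr, True) = [(Gs, True)]"
| "phi_letter (Gs, True) = [(Gs, True), (Gr, True)]"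

definition phi_word :: "word \<Rightarrow> word" where
  "phi_word w = concat (map phi_letter w)"

definition phi_pull :: "(word \<Rightarrow> complex) \<Rightarrow> word \<Rightarrow> complex" where
  "phi_pull \<psi> = \<psi> \<circ> phi_word"

end

theory Submission
  imports Defs
begin

lemma mat_eq2: "(M::'a^2^2) = N \<longleftrightarrow> M$1$1 = N$1$1 \<and> M$1$2 = N$1$2 \<and> M$2$1 = N$2$1 \<and> M$2$2 = N$2$2"
  by (auto simp: vec_eq_iff forall_2)

lemma mult2: "((M::'a::semiring_1^2^2) ** N)$i$j = M$i$1 * N$1$j + M$i$2 * N$2$j"
  by (simp add: matrix_matrix_mult_def sum_2)

lemma trace2: "trace (M::'a::semiring_1^2^2) = M$1$1 + M$2$2"
  by (simp add: trace_def sum_2)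

lemma mat1_2: "(mat 1 :: 'a::semiring_1^2^2)$i$j = (if i = j then 1 else 0)"
  by (simp add: mat_def)

definition adj2 :: "complex^2^2 \<Rightarrow> complex^2^2" where
  "adj2 M = (\<chi> i j. if i = 1 \<and> j = 1 then M$2$2 else if i = 2 \<and> j = 2 then M$1$1
     else - M$i$j)"

lemma adj2_ent: "(adj2 M)$1$1 = M$2$2" "(adj2 M)$2$2 = M$1$1" "(adj2 M)$1$2 = - M$1$2" "(adj2 M)$2$1 = - M$2$1"
  by (simp_all add: adj2_def)

lemma matrix_inv_eqI:
  fixes A M :: "'a::semiring_1^'n^'n"
  assumes "A ** M = mat 1" "M ** A = mat 1"
  shows "matrix_inv A = M"
proof -
  have "\<exists>M'. A ** M' = mat 1 \<and> M' ** A = mat 1" using assms by blast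
  then have h: "A ** matrix_inv A = mat 1 \<and> matrix_inv A ** A = mat 1"
    unfolding matrix_inv_def by (rule someI_ex)
  have "matrix_inv A = matrix_inv A ** (A ** M)" using assms by simp
  also have "\<dots> = M" using h by (simp add: matrix_mul_assoc)
  finally show ?thesis .
qed

lemma inv2: assumes "det (A::complex^2^2) = 1" shows "matrix_inv A = adj2 A"
  apply (rule matrix_inv_eqI)
  using assms by (simp_all add: mat_eq2 mult2 adj2_ent mat1_2 det_2 algebra_simps)

type_synonym cf = "complex \<times> complex \<times> complex \<times> complex"

definition stepc :: "complex \<Rightarrow> complex \<Rightarrow> complex \<Rightarrow> gen \<times> bool \<Rightarrow> cf \<Rightarrow> cf" where
  "stepc a b c l v = (let x = fst v; y = fst (snd v); z = fst (snd (snd v)); t = snd (snd (snd v)) in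
    (case l of
      (Gr, False) \<Rightarrow> (-y, x + a*y, -t, z + a*t)
    | (Gr, True) \<Rightarrow> (a*x + y, -x, a*z + t, -z)
    | (Gs, False) \<Rightarrow> (y*(c - a*b) - z - a*t, b*y + t, x + a*y + b*z + c*t, -y)
    | (Gs, True) \<Rightarrow> (b*x - y*(c - a*b) + z + a*t, -t, -x - a*y - c*t, y + b*t)))"

fun Tc :: "complex \<Rightarrow> complex \<Rightarrow> complex \<Rightarrow> word \<Rightarrow> cf" where
  "Tc a b c [] = (1, 0, 0, 0)"
| "Tc a b c (l # w) = stepc a b c l (Tc a b c w)"

definition trc :: "complex \<Rightarrow> complex \<Rightarrow> complex \<Rightarrow> cf \<Rightarrow> complex" where
  "trc a b c v = 2 * fst v + a * fst (snd v) + b * fst (snd (snd v)) + c * snd (snd (snd v))"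

definition comb :: "cf \<Rightarrow> complex^2^2 \<Rightarrow> complex^2^2 \<Rightarrow> complex^2^2" where
  "comb v A B = (\<chi> i j. (if i = j then fst v else 0) + fst (snd v) * A$i$j
     + fst (snd (snd v)) * B$i$j + snd (snd (snd v)) * (A ** B)$i$j)"

lemma comb_ent: "comb (x, y, z, t) A B $ i $ j = (if i = j then x else 0) + y * A$i$j + z * B$i$j + t * (A ** B)$i$j"
  by (simp add: comb_def)

lemma step_cases:
  assumes dA: "det A = 1" and dB: "det B = 1"
  shows "A ** comb v A B = comb (stepc (trace A) (trace B) (trace (A ** B)) (Gr, False) v) A B"
    "matrix_inv A ** comb v A B = comb (stepc (trace A) (trace B) (trace (A ** B)) (Gr, True) v) A B"
    "B ** comb v A B = comb (stepc (trace A) (trace B) (trace (A ** B)) (Gs, False) v) A B"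
    "matrix_inv B ** comb v A B = comb (stepc (trace A) (trace B) (trace (A ** B)) (Gs, True) v) A B"
proof -
  obtain x y z t where v: "v = (x, y, z, t)" by (cases v) auto
  have d1: "A$1$1 * A$2$2 = 1 + A$1$2 * A$2$1" using dA by (simp add: det_2 algebra_simps)
  have d2: "B$1$1 * B$2$2 = 1 + B$1$2 * B$2$1" using dB by (simp add: det_2 algebra_simps)
  show "A ** comb v A B = comb (stepc (trace A) (trace B) (trace (A ** B)) (Gr, False) v) A B"
    using d1 d2 by (simp add: v stepc_def comb_ent inv2 dA dB mat_eq2 mult2 trace2 adj2_ent; intro conjI; algebra)
  show "matrix_inv A ** comb v A B = comb (stepc (trace A) (trace B) (trace (A ** B)) (Gr, True) v) A B"
    using d1 d2 by (simp add: v stepc_def comb_ent inv2 dA dB mat_eq2 mult2 trace2 adj2_ent; intro conjI; algebra)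
  show "B ** comb v A B = comb (stepc (trace A) (trace B) (trace (A ** B)) (Gs, False) v) A B"
    using d1 d2 by (simp add: v stepc_def comb_ent inv2 dA dB mat_eq2 mult2 trace2 adj2_ent; intro conjI; algebra)
  show "matrix_inv B ** comb v A B = comb (stepc (trace A) (trace B) (trace (A ** B)) (Gs, True) v) A B"
    using d1 d2 by (simp add: v stepc_def comb_ent inv2 dA dB mat_eq2 mult2 trace2 adj2_ent; intro conjI; algebra)
qed

lemma rep_comb:
  assumes "SL2_rep \<rho>"
  shows "rep_word \<rho> w = comb (Tc (trace (\<rho> Gr)) (trace (\<rho> Gs)) (trace (\<rho> Gr ** \<rho> Gs)) w) (\<rho> Gr) (\<rho> Gs)"
proof (induction w)
  case Nil
  then show ?case by (simp add: mat_eq2 comb_ent mat1_2)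
next
  case (Cons l w)
  have dA: "det (\<rho> Gr) = 1" and dB: "det (\<rho> Gs) = 1" using assms by (auto simp: SL2_rep_def)
  obtain g bb where l: "l = (g, bb)" by (cases l) auto
  show ?case
    using step_cases[OF dA dB] Cons.IH
    by (cases g; cases bb) (simp_all add: l letter_mat_def)
qed

lemma char_T:
  assumes "SL2_rep \<rho>"
  shows "character \<rho> w = trc (trace (\<rho> Gr)) (trace (\<rho> Gs)) (trace (\<rho> Gr ** \<rho> Gs))
     (Tc (trace (\<rho> Gr)) (trace (\<rho> Gs)) (trace (\<rho> Gr ** \<rho> Gs)) w)"
proof -
  obtain x y z t where v: "Tc (trace (\<rho> Gr)) (trace (\<rho> Gs)) (trace (\<rho> Gr ** \<rho> Gs)) w = (x, y, z, t)"
    by (metis prod_cases4)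
  show ?thesis unfolding character_def rep_comb[OF assms] v
    by (simp add: trace2 comb_ent trc_def mult2 algebra_simps)
qed

definition cnj4 :: "cf \<Rightarrow> cf" where
  "cnj4 v = (cnj (fst v), cnj (fst (snd v)), cnj (fst (snd (snd v))), cnj (snd (snd (snd v))))"

lemma Tc_cnj: "Tc (cnj a) (cnj b) (cnj c) w = cnj4 (Tc a b c w)"
proof (induction w)
  case Nil
  then show ?case by (simp add: cnj4_def)
next
  case (Cons l w)
  obtain g bb where l: "l = (g, bb)" by (cases l) auto
  show ?case using Cons.IH by (cases g; cases bb) (simp_all add: l stepc_def cnj4_def Let_def)
qed

lemma trc_cnj: "cnj (trc a b c (Tc a b c w)) = trc (cnj a) (cnj b) (cnj c) (Tc (cnj a) (cnj b) (cnj c) w)"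
  by (simp add: Tc_cnj trc_def cnj4_def)

lemma Tc_cont:
  assumes "continuous_on S fa" "continuous_on S fb" "continuous_on S fc"
  shows "continuous_on S (\<lambda>y. Tc (fa y) (fb y) (fc y) w)"
proof (induction w)
  case Nil
  then show ?case by simp
next
  case (Cons l w)
  obtain g bb where l: "l = (g, bb)" by (cases l) auto
  have c1: "continuous_on S (\<lambda>y. fst (Tc (fa y) (fb y) (fc y) w))"
    "continuous_on S (\<lambda>y. fst (snd (Tc (fa y) (fb y) (fc y) w)))"
    "continuous_on S (\<lambda>y. fst (snd (snd (Tc (fa y) (fb y) (fc y) w))))"
    "continuous_on S (\<lambda>y. snd (snd (snd (Tc (fa y) (fb y) (fc y) w))))"
    using Cons.IH by (auto intro!: continuous_intros)
  show ?case unfolding l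
    by (cases g; cases bb) (auto simp: stepc_def Let_def intro!: continuous_intros c1 assms)
qed

lemma rep_append: "rep_word \<rho> (u @ v) = rep_word \<rho> u ** rep_word \<rho> v"
  by (induction u) (simp_all add: matrix_mul_assoc)

lemma rep_phi:
  assumes "SL2_rep \<rho>"
  shows "rep_word \<rho> (phi_word w) = rep_word (\<lambda>g. if g = Gr then \<rho> Gs else \<rho> Gr ** \<rho> Gs) w"
proof (induction w)
  case Nil
  then show ?case by (simp add: phi_word_def)
next
  case (Cons l w)
  have dA: "det (\<rho> Gr) = 1" and dB: "det (\<rho> Gs) = 1" using assms by (auto simp: SL2_rep_def)
  have dAB: "det (\<rho> Gr ** \<rho> Gs) = 1" using dA dB by (simp add: det_mul)
  have inv: "matrix_inv (\<rho> Gr ** \<rho> Gs) = matrix_inv (\<rho> Gs) ** matrix_inv (\<rho> Gr)"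
    unfolding inv2[OF dAB] inv2[OF dA] inv2[OF dB]
    by (simp add: mat_eq2 mult2 adj2_ent algebra_simps)
  have pw: "phi_word (l # w) = phi_letter l @ phi_word w" by (simp add: phi_word_def)
  obtain g bb where l: "l = (g, bb)" by (cases l) auto
  show ?case unfolding pw rep_append Cons.IH
    by (cases g; cases bb) (simp_all add: l letter_mat_def inv matrix_mul_assoc)
qed

lemma exists_rep: "\<exists>\<rho>. SL2_rep \<rho> \<and> trace (\<rho> Gr) = a \<and> trace (\<rho> Gs) = b \<and> trace (\<rho> Gr ** \<rho> Gs) = c"
proof -
  define \<zeta> where "\<zeta> = (- c + csqrt (c^2 - 4)) / 2"
  have hz: "\<zeta>^2 + c * \<zeta> + 1 = 0"
  proof -
    have "(csqrt (c^2 - 4))^2 = c^2 - 4" by simp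
    then show ?thesis unfolding \<zeta>_def by (simp add: field_simps power2_eq_square) algebra
  qed
  have nz: "\<zeta> \<noteq> 0" using hz by auto
  define A :: "complex^2^2" where "A = (\<chi> i j. if i = 1 \<and> j = 1 then a else if i = 1 \<and> j = 2 then 1
     else if i = 2 \<and> j = 1 then -1 else 0)"
  define B :: "complex^2^2" where "B = (\<chi> i j. if i = 1 \<and> j = 1 then 0 else if i = 1 \<and> j = 2 then \<zeta>
     else if i = 2 \<and> j = 1 then - 1 / \<zeta> else b)"
  define \<rho> where "\<rho> = (\<lambda>g. if g = Gr then A else B)"
  have "SL2_rep \<rho>" unfolding SL2_rep_def \<rho>_def
    using nz by (auto simp: det_2 A_def B_def)
  moreover have "trace (\<rho> Gr) = a" "trace (\<rho> Gs) = b" by (simp_all add: \<rho>_def A_def B_def trace2)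
  moreover have "trace (\<rho> Gr ** \<rho> Gs) = c"
  proof -
    have "trace (\<rho> Gr ** \<rho> Gs) = - 1 / \<zeta> - \<zeta>" by (simp add: \<rho>_def A_def B_def trace2 mult2)
    also have "\<dots> = c" using nz hz by (simp add: field_simps power2_eq_square) algebra
    finally show ?thesis .
  qed
  ultimately show ?thesis by blast
qed

definition Gmap :: "complex \<Rightarrow> word \<Rightarrow> complex" where
  "Gmap y = (\<lambda>w. trc (cnj y) y (cnj y) (Tc (cnj y) y (cnj y) w))"

lemma circle_iff: "cmod (y - 1) = 1 \<longleftrightarrow> cnj y * y = y + cnj y"
proof -
  have "cmod (y - 1) = 1 \<longleftrightarrow> (cmod (y - 1))^2 = 1"
    using norm_ge_zero[of "y-1"] power2_eq_imp_eq[of "cmod (y-1)" 1] by auto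
  also have "\<dots> \<longleftrightarrow> complex_of_real ((cmod (y - 1))^2) = 1" by (metis of_real_eq_1_iff)
  also have "\<dots> \<longleftrightarrow> (y - 1) * cnj (y - 1) = 1" by (simp only: complex_norm_square)
  also have "\<dots> \<longleftrightarrow> cnj y * y = y + cnj y" by (auto simp: algebra_simps)
  finally show ?thesis .
qed

lemma fact1:
  assumes "\<psi> \<in> char_variety" "phi_pull \<psi> = (\<lambda>w. cnj (\<psi> w))"
  shows "Gmap (\<psi> [(Gs, False)]) = \<psi> \<and> cmod (\<psi> [(Gs, False)] - 1) = 1"
proof -
  obtain \<rho> where r: "SL2_rep \<rho>" and p: "\<psi> = character \<rho>" using assms(1) by (auto simp: char_variety_def)
  define a where "a = trace (\<rho> Gr)"
  define b where "b = trace (\<rho> Gs)"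
  define c where "c = trace (\<rho> Gr ** \<rho> Gs)"
  have ch: "\<And>w. \<psi> w = trc a b c (Tc a b c w)" unfolding p a_def b_def c_def by (rule char_T[OF r])
  have e: "\<psi> (phi_word w) = cnj (\<psi> w)" for w
    using fun_cong[OF assms(2), of w] by (simp add: phi_pull_def)
  have e1: "b = cnj a" using e[of "[(Gr, False)]"] unfolding ch by (simp add: phi_word_def trc_def stepc_def)
  have e2: "c = cnj b" using e[of "[(Gs, False)]"] unfolding ch by (simp add: phi_word_def trc_def stepc_def)
  have e3: "b * c - a = cnj c" using e[of "[(Gr, False), (Gs, False)]"] unfolding ch
    by (simp add: phi_word_def trc_def stepc_def)
  have sb: "\<psi> [(Gs, False)] = b" unfolding ch by (simp add: trc_def stepc_def)
  have ab: "a = cnj b" using e1 by simp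
  have "Gmap b = \<psi>" unfolding Gmap_def by (rule ext) (simp only: ch ab e2)
  moreover have "cmod (b - 1) = 1" unfolding circle_iff using e3 unfolding ab e2 complex_cnj_cnj
    by (metis diff_eq_eq mult.commute add.commute)
  ultimately show ?thesis using sb by simp
qed

lemma fact2:
  assumes "cmod (y - 1) = 1"
  shows "Gmap y \<in> char_variety \<and> phi_pull (Gmap y) = (\<lambda>w. cnj (Gmap y w)) \<and> Gmap y [(Gs, False)] = y"
proof -
  have cy: "cnj y * y = y + cnj y" using circle_iff[THEN iffD1, OF assms] .
  obtain \<rho> where r: "SL2_rep \<rho>" and t: "trace (\<rho> Gr) = cnj y" "trace (\<rho> Gs) = y"
    "trace (\<rho> Gr ** \<rho> Gs) = cnj y" using exists_rep by blast
  have ch: "character \<rho> = Gmap y" unfolding Gmap_def by (rule ext) (simp only: char_T[OF r] t)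
  define \<rho>' where "\<rho>' = (\<lambda>g. if g = Gr then \<rho> Gs else \<rho> Gr ** \<rho> Gs)"
  have r': "SL2_rep \<rho>'" using r unfolding SL2_rep_def \<rho>'_def by (simp add: det_mul)
  have t'3: "trace (\<rho> Gs ** (\<rho> Gr ** \<rho> Gs)) = y"
  proof -
    have "trace (\<rho> Gs ** (\<rho> Gr ** \<rho> Gs)) = character \<rho> [(Gs, False), (Gr, False), (Gs, False)]"
      by (simp add: character_def letter_mat_def)
    also have "\<dots> = y * cnj y - cnj y" unfolding ch Gmap_def by (simp add: trc_def stepc_def)
    also have "\<dots> = y" using cy by algebra
    finally show ?thesis .
  qed
  have pp: "phi_pull (Gmap y) w = cnj (Gmap y w)" for w
  proof -
    have "phi_pull (Gmap y) w = character \<rho>' w"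
      unfolding ch[symmetric] phi_pull_def character_def \<rho>'_def using rep_phi[OF r] by simp
    also have "\<dots> = trc y (cnj y) y (Tc y (cnj y) y w)"
      unfolding char_T[OF r'] unfolding \<rho>'_def using t t'3 by simp
    also have "\<dots> = cnj (Gmap y w)" unfolding Gmap_def trc_cnj by simp
    finally show ?thesis .
  qed
  have c1: "Gmap y \<in> char_variety" unfolding char_variety_def ch[symmetric]
    by (intro CollectI exI[of _ \<rho>]) (simp add: r)
  have c2: "Gmap y [(Gs, False)] = y" by (simp add: Gmap_def trc_def stepc_def)
  have c3: "phi_pull (Gmap y) = (\<lambda>w. cnj (Gmap y w))" by (rule ext) (rule pp)
  show ?thesis by (intro conjI c1 c2 c3)
qed

lemma Gmap_cont: "continuous_on S Gmap"
  unfolding Gmap_def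
  apply (intro continuous_on_coordinatewise_then_product)
  subgoal for w
    using Tc_cont[of S cnj "\<lambda>y. y" cnj w]
    unfolding trc_def by (auto intro!: continuous_intros)
  done

theorem lemma6p4:
  shows "\<exists>g. homeomorphism
           {\<psi> \<in> char_variety. phi_pull \<psi> = (\<lambda>w. cnj (\<psi> w))}
           {x::complex. cmod (x - 1) = 1}
           (\<lambda>\<psi>. \<psi> [(Gs, False)]) g"
proof (intro exI[of _ Gmap] homeomorphismI)
  show "continuous_on {\<psi> \<in> char_variety. phi_pull \<psi> = (\<lambda>w. cnj (\<psi> w))} (\<lambda>\<psi>. \<psi> [(Gs, False)])"
    by (rule continuous_on_subset[OF continuous_on_product_coordinates]) simp
  show "continuous_on {x::complex. cmod (x - 1) = 1} Gmap" by (rule Gmap_cont)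
  show "(\<lambda>\<psi>. \<psi> [(Gs, False)]) ` {\<psi> \<in> char_variety. phi_pull \<psi> = (\<lambda>w. cnj (\<psi> w))}
        \<subseteq> {x::complex. cmod (x - 1) = 1}" using fact1 by auto
  show "Gmap ` {x::complex. cmod (x - 1) = 1} \<subseteq> {\<psi> \<in> char_variety. phi_pull \<psi> = (\<lambda>w. cnj (\<psi> w))}"
    using fact2 by auto
  show "\<And>x. x \<in> {\<psi> \<in> char_variety. phi_pull \<psi> = (\<lambda>w. cnj (\<psi> w))} \<Longrightarrow> Gmap (x [(Gs, False)]) = x"
    using fact1 by auto
  show "\<And>y. y \<in> {x::complex. cmod (x - 1) = 1} \<Longrightarrow> Gmap y [(Gs, False)] = y"
    using fact2 by auto
qed

end
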